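(* Let $C$ be a monotone normalized cost function and let $H:2^{M_1}\times\cdots\times2^{M_n}\to\mathbb{R}_{\ge0}\cup\{\infty\}$ be normalized ($H(\vec\emptyset)=0$) and monotone. Let $\mathcal A$ be the VCG-based mechanism with function $H$, defined on a valuation domain that contains all additive valuations, and suppose that $\mathcal A$ always covers the cost on this domain. Then $H(\vec S)\ge P_C(\vec S)$ for every allocation $\vec S$.
   Context: Setting. $N=\{1,\dots,n\}$ is a set of players and $M_1,\dots,M_n$ are pairwise disjoint finite sets; $M=\bigcup_i M_i$. An allocation is a vector $\vec S=(S_1,\dots,S_n)$ with $S_i\subseteq M_i$, identified with $\bigcup_iS_i\subseteq M$; $\vec\emptyset=(\emptyset,\dots,\emptyset)$. A cost function is a monotone $C:2^M\to\mathbb{R}_{\ge0}$ with $C(\emptyset)=0$; valuations $v_i:2^{M_i}\to\mathbb R_{\ge0}$ are monotone with $v_i(\emptyset)=0$; $v_i$ is additive if $v_i(S)=\sum_{j\in S}v_i(\{j\})$. The potential function is $P_C(\vec S)=\sum_{\emptyset\neq I\subseteq N}\frac{C(\bigcup_{i\in I}S_i)}{|I|\binom{n}{|I|}}$. The VCG-based mechanism with $H$ outputs $\overrightarrow{ALG}\in\arg\max_{\vec S}\sum_iv_i(S_i)-H(\vec S)$ (some tie-breaking), for each $i$ computes $\overrightarrow{ALG^{-i}}$ maximizing the same objective over allocations with $i$-th component $\emptyset$, and charges $p_i=\left[\sum_jv_j(ALG^{-i}_j)-H(\overrightarrow{ALG^{-i}})\right]-\left[\sum_{j\ne i}v_j(ALG_j)-H(\overrightarrow{ALG})\right]$.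 It always covers the cost if $\sum_ip_i\ge C(\overrightarrow{ALG})$ for every profile in the domain. *)

theory Defs
  imports "HOL-Analysis.Analysis" "HOL-Library.Extended_Real"
begin

definition allocs :: "nat \<Rightarrow> (nat \<Rightarrow> 'a set) \<Rightarrow> (nat \<Rightarrow> 'a set) set" where
  "allocs n M = {S. (\<forall>i<n. S i \<subseteq> M i) \<and> (\<forall>i\<ge>n. S i = {})}"

definition empty_alloc :: "nat \<Rightarrow> 'a set" where
  "empty_alloc = (\<lambda>i. {})"

definition alloc_union :: "nat \<Rightarrow> (nat \<Rightarrow> 'a set) \<Rightarrow> 'a set" where
  "alloc_union n S = (\<Union>i<n. S i)"

definition potential :: "nat \<Rightarrow> ('a set \<Rightarrow> real) \<Rightarrow> (nat \<Rightarrow> 'a set) \<Rightarrow> real" where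
  "potential n C S =
     (\<Sum>I\<in>{I. I \<subseteq> {..<n} \<and> I \<noteq> {}}.
        C (\<Union>i\<in>I. S i) / (real (card I) * real (n choose card I)))"

definition cost_function :: "nat \<Rightarrow> (nat \<Rightarrow> 'a set) \<Rightarrow> ('a set \<Rightarrow> real) \<Rightarrow> bool" where
  "cost_function n M C \<longleftrightarrow> C {} = 0 \<and>
     (\<forall>A. A \<subseteq> (\<Union>i<n. M i) \<longrightarrow> C A \<ge> 0) \<and>
     (\<forall>A B. A \<subseteq> B \<and> B \<subseteq> (\<Union>i<n. M i) \<longrightarrow> C A \<le> C B)"

definition valuation :: "'a set \<Rightarrow> ('a set \<Rightarrow> real) \<Rightarrow> bool" where
  "valuation Mi w \<longleftrightarrow> w {} = 0 \<and> (\<forall>A. A \<subseteq> Mi \<longrightarrow> w A \<ge> 0) \<and>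
     (\<forall>A B. A \<subseteq> B \<and> B \<subseteq> Mi \<longrightarrow> w A \<le> w B)"

definition additive_valuation :: "'a set \<Rightarrow> ('a set \<Rightarrow> real) \<Rightarrow> bool" where
  "additive_valuation Mi w \<longleftrightarrow> valuation Mi w \<and>
     (\<forall>A. A \<subseteq> Mi \<longrightarrow> w A = (\<Sum>j\<in>A. w {j}))"

definition welfare :: "nat \<Rightarrow> (nat \<Rightarrow> 'a set \<Rightarrow> real) \<Rightarrow> (nat \<Rightarrow> 'a set) \<Rightarrow> real" where
  "welfare n v S = (\<Sum>i<n. v i (S i))"

definition objective ::
  "nat \<Rightarrow> ((nat \<Rightarrow> 'a set) \<Rightarrow> ereal) \<Rightarrow> (nat \<Rightarrow> 'a set \<Rightarrow> real) \<Rightarrow> (nat \<Rightarrow> 'a set) \<Rightarrow> ereal" where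
  "objective n H v S = ereal (welfare n v S) - H S"

definition is_maximizer ::
  "nat \<Rightarrow> ((nat \<Rightarrow> 'a set) \<Rightarrow> ereal) \<Rightarrow> (nat \<Rightarrow> 'a set \<Rightarrow> real) \<Rightarrow> (nat \<Rightarrow> 'a set) set
     \<Rightarrow> (nat \<Rightarrow> 'a set) \<Rightarrow> bool" where
  "is_maximizer n H v A S \<longleftrightarrow> S \<in> A \<and> (\<forall>T\<in>A. objective n H v T \<le> objective n H v S)"

text \<open>VCG payment of player i, given the chosen allocation alg and the allocation algi
  chosen without player i.\<close>
definition vcg_payment ::
  "nat \<Rightarrow> ((nat \<Rightarrow> 'a set) \<Rightarrow> ereal) \<Rightarrow> (nat \<Rightarrow> 'a set \<Rightarrow> real) \<Rightarrow> (nat \<Rightarrow> 'a set)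
     \<Rightarrow> (nat \<Rightarrow> 'a set) \<Rightarrow> nat \<Rightarrow> ereal" where
  "vcg_payment n H v alg algi i =
     (ereal (welfare n v algi) - H algi)
     - (ereal (\<Sum>j\<in>{..<n} - {i}. v j (alg j)) - H alg)"

end

theory Submission
  imports Defs
begin


lemma binom_step: "k < n \<Longrightarrow> (k+1) * (n choose (k+1)) = (n - k) * (n choose k)"
  by (metis Suc_eq_plus1 Suc_times_binomial binomial_absorb_comp Suc_diff_1 not_less0 gr0I less_nat_zero_code)

lemma coef:
  assumes "1 \<le> k" "k \<le> n"
  shows "real n * (1/(real k * real (n choose k)))
     - real (n - k) * (1/(real k * real (n choose k)) + 1/(real (k+1) * real (n choose (k+1))))
     = (if k = n then 1 else 0)"
proof (cases "k = n")
  case True then show ?thesis using assms by simp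
next
  case False
  then have kn: "k < n" using assms by simp
  have b: "real (k+1) * real (n choose (k+1)) = real (n - k) * real (n choose k)"
    using binom_step[OF kn] by (metis of_nat_mult)
  have pos: "real (n choose k) > 0" using assms by simp
  have nk: "real (n - k) > 0" using kn by simp
  have "real n * (1/(real k * real (n choose k)))
     - real (n - k) * (1/(real k * real (n choose k)) + 1/(real (k+1) * real (n choose (k+1))))
     = (real n - real (n-k)) / (real k * real (n choose k)) - 1 / real (n choose k)"
    unfolding b using pos nk by (simp add: field_simps)
  also have "real n - real (n-k) = real k" using kn by simp
  finally show ?thesis using False assms pos by simp
qed

lemma card_sum_single:
  "finite A \<Longrightarrow> (\<Sum>x\<in>A. real (card ({x} \<inter> B))) = real (card (A \<inter> B))"
proof (induction A rule: finite_induct)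
  case empty then show ?case by simp
next
  case (insert x A)
  then show ?case by (auto simp: Int_insert_left)
qed



lemma pot_id:
  fixes C :: "'a set \<Rightarrow> real" and S :: "nat \<Rightarrow> 'a set"
  assumes C0: "C {} = 0"
  shows "(\<Sum>i<n. potential n C S - potential n C (S(i:={}))) = C (\<Union>i<n. S i)"
proof -
  define N where "N = {..<n}"
  define Pne where "Pne = {I. I \<subseteq> N \<and> I \<noteq> {}}"
  define c where "c k = 1/(real k * real (n choose k))" for k
  define f where "f I = C (\<Union>j\<in>I. S j)" for I
  define g where "g I = (c (card I) + c (card I + 1)) * f I" for I
  have finN: "finite N" unfolding N_def by simp
  have finP: "finite Pne" unfolding Pne_def using finN by simp
  have f0: "f {} = 0" unfolding f_def using C0 by simp
  have P: "potential n C X = (\<Sum>I\<in>Pne. c (card I) * C (\<Union>j\<in>I. X j))" for X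
    unfolding potential_def Pne_def N_def c_def by simp
  have PS: "potential n C S = (\<Sum>I\<in>Pne. c (card I) * f I)"
    using P[of S] unfolding f_def by simp
  have Pi: "potential n C (S(i:={})) = (\<Sum>I\<in>Pne. if i \<notin> I then g I else 0)" if iN: "i \<in> N" for i
  proof -
    define A where "A = {I\<in>Pne. i \<notin> I}"
    define B where "B = {I\<in>Pne. i \<in> I}"
    have "potential n C (S(i:={})) = (\<Sum>I\<in>Pne. c (card I) * f (I - {i}))"
      unfolding P[of "S(i:={})"] f_def
      by (intro sum.cong) (auto intro!: arg_cong[where f=C])
    also have "Pne = A \<union> B" unfolding A_def B_def by auto
    also have "(\<Sum>I\<in>A \<union> B. c (card I) * f (I - {i})) =
        (\<Sum>I\<in>A. c (card I) * f (I - {i})) + (\<Sum>I\<in>B. c (card I) * f (I - {i}))"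
      by (rule sum.union_disjoint) (use finP in \<open>auto simp: A_def B_def\<close>)
    also have "(\<Sum>I\<in>A. c (card I) * f (I - {i})) = (\<Sum>I\<in>A. c (card I) * f I)"
      by (intro sum.cong) (auto simp: A_def)
    also have "B = insert i ` Pow (N - {i})"
    proof
      show "B \<subseteq> insert i ` Pow (N - {i})"
      proof
        fix I assume "I \<in> B"
        then have "I = insert i (I - {i})" "I - {i} \<in> Pow (N - {i})" unfolding B_def Pne_def by auto
        then show "I \<in> insert i ` Pow (N - {i})" by blast
      qed
      show "insert i ` Pow (N - {i}) \<subseteq> B" using iN unfolding B_def Pne_def by auto
    qed
    also have "(\<Sum>I\<in>insert i ` Pow (N - {i}). c (card I) * f (I - {i}))
        = (\<Sum>J\<in>Pow (N - {i}). c (card J + 1) * f J)"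
    proof (subst sum.reindex)
      show "inj_on (insert i) (Pow (N - {i}))"
        unfolding inj_on_def by (metis Diff_insert_absorb PowD insert_Diff1 singletonI subset_Diff_insert)
      show "(\<Sum>J\<in>Pow (N - {i}). ((\<lambda>I. c (card I) * f (I - {i})) \<circ> insert i) J) =
          (\<Sum>J\<in>Pow (N - {i}). c (card J + 1) * f J)"
      proof (intro sum.cong refl)
        fix J assume J: "J \<in> Pow (N - {i})"
        then have "finite J" "i \<notin> J" using finN finite_subset by auto
        then show "((\<lambda>I. c (card I) * f (I - {i})) \<circ> insert i) J = c (card J + 1) * f J"
          by simp
      qed
    qed
    also have "Pow (N - {i}) = insert {} A" unfolding A_def Pne_def by auto
    also have "(\<Sum>J\<in>insert {} A. c (card J + 1) * f J) = (\<Sum>J\<in>A. c (card J + 1) * f J)"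
      using f0 finP by (subst sum.insert) (auto simp: A_def Pne_def intro: finite_subset[OF _ finP])
    also have "(\<Sum>I\<in>A. c (card I) * f I) + (\<Sum>J\<in>A. c (card J + 1) * f J) = (\<Sum>I\<in>A. g I)"
      unfolding g_def by (simp add: sum.distrib[symmetric] algebra_simps)
    also have "\<dots> = (\<Sum>I\<in>Pne. if i \<notin> I then g I else 0)"
      unfolding A_def using finP by (simp add: sum.inter_filter)
    finally show ?thesis .
  qed
  have "(\<Sum>i<n. potential n C S - potential n C (S(i:={})))
      = real n * potential n C S - (\<Sum>i\<in>N. potential n C (S(i:={})))"
    by (simp add: sum_subtractf N_def)
  also have "(\<Sum>i\<in>N. potential n C (S(i:={}))) = (\<Sum>i\<in>N. \<Sum>I\<in>Pne. if i \<notin> I then g I else 0)"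
    using Pi by simp
  also have "\<dots> = (\<Sum>I\<in>Pne. \<Sum>i\<in>N. if i \<notin> I then g I else 0)" by (rule sum.swap)
  also have "\<dots> = (\<Sum>I\<in>Pne. real (n - card I) * g I)"
  proof (intro sum.cong refl)
    fix I assume I: "I \<in> Pne"
    have "(\<Sum>i\<in>N. if i \<notin> I then g I else 0) = (\<Sum>i\<in>{i\<in>N. i \<notin> I}. g I)"
      using finN by (simp add: sum.inter_filter[symmetric])
    also have "{i\<in>N. i \<notin> I} = N - I" by auto
    also have "(\<Sum>i\<in>N - I. g I) = real (card (N - I)) * g I" by simp
    also have "card (N - I) = n - card I"
      using I finN unfolding Pne_def N_def by (metis (mono_tags, lifting) card_Diff_subset card_lessThan finite_lessThan finite_subset mem_Collect_eq)
    finally show "(\<Sum>i\<in>N. if i \<notin> I then g I else 0) = real (n - card I) * g I" by simp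
  qed
  also have "real n * potential n C S - (\<Sum>I\<in>Pne. real (n - card I) * g I)
      = (\<Sum>I\<in>Pne. (real n * c (card I) - real (n - card I) * (c (card I) + c (card I + 1))) * f I)"
    unfolding PS g_def by (simp add: sum_distrib_left sum_subtractf[symmetric] algebra_simps)
  also have "\<dots> = (\<Sum>I\<in>Pne. if card I = n then f I else 0)"
  proof (intro sum.cong refl)
    fix I assume I: "I \<in> Pne"
    then have "1 \<le> card I" "card I \<le> n" using finN unfolding Pne_def N_def
      by (auto simp: Suc_le_eq card_gt_0_iff finite_subset intro: card_mono[where B="{..<n}", simplified])
    then show "(real n * c (card I) - real (n - card I) * (c (card I) + c (card I + 1))) * f I
        = (if card I = n then f I else 0)"
      unfolding c_def using coef[of "card I" n] by simp
  qed
  also have "\<dots> = (\<Sum>I\<in>{I\<in>Pne. card I = n}. f I)"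
    using finP by (simp add: sum.inter_filter)
  also have "\<dots> = C (\<Union>i<n. S i)"
  proof (cases "n = 0")
    case True
    have e: "{I\<in>Pne. card I = n} = {}" using True unfolding Pne_def N_def by simp
    show ?thesis unfolding e using True C0 by simp
  next
    case False
    have "{I\<in>Pne. card I = n} = {N}"
    proof
      show "{I\<in>Pne. card I = n} \<subseteq> {N}"
      proof
        fix I assume "I \<in> {I\<in>Pne. card I = n}"
        then have "I \<subseteq> {..<n}" "card I = card {..<n}" unfolding Pne_def N_def by auto
        then have "I = N" unfolding N_def by (metis card_subset_eq finite_lessThan)
        then show "I \<in> {N}" by simp
      qed
      show "{N} \<subseteq> {I\<in>Pne. card I = n}" using False unfolding Pne_def N_def by (simp add: lessThan_empty_iff)
    qed
    then show ?thesis unfolding f_def N_def by (simp only: sum.insert sum.empty) simp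
  qed
  finally show ?thesis .
qed



lemma welfare_v: "welfare n (\<lambda>j A. L * real (card (A \<inter> S j))) X = L * (\<Sum>j<n. real (card (X j \<inter> S j)))"
  by (simp add: welfare_def sum_distrib_left)

lemma core:
  fixes H :: "(nat \<Rightarrow> 'a set) \<Rightarrow> ereal"
  assumes fin: "\<forall>j<n. finite (S j)"
    and RS: "\<forall>j<n. R j \<subseteq> S j" and TS: "\<forall>j<n. T j \<inter> S j \<subseteq> R j"
    and hR: "H R = ereal h" and h0: "0 \<le> h" and hL: "h < L"
    and Hnn: "H T \<ge> 0"
    and Hmono: "(\<forall>j<n. R j \<subseteq> T j) \<Longrightarrow> H R \<le> H T"
    and obj: "objective n H (\<lambda>j A. L * real (card (A \<inter> S j))) R
               \<le> objective n H (\<lambda>j A. L * real (card (A \<inter> S j))) T"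
  shows "(\<forall>j<n. R j \<subseteq> T j) \<and> H T = H R \<and> (\<forall>j<n. T j \<inter> S j = R j)"
proof -
  define wT where "wT = (\<Sum>j<n. real (card (T j \<inter> S j)))"
  define wR where "wR = (\<Sum>j<n. real (card (R j \<inter> S j)))"
  have finR: "\<forall>j<n. finite (R j)" using fin RS finite_subset by blast
  have RSe: "\<forall>j<n. R j \<inter> S j = R j" using RS by blast
  have le: "\<forall>j<n. card (T j \<inter> S j) \<le> card (R j \<inter> S j)"
  proof (intro allI impI)
    fix j assume j: "j < n"
    show "card (T j \<inter> S j) \<le> card (R j \<inter> S j)"
      by (rule card_mono) (use j finR RSe TS in auto)
  qed
  have oT: "objective n H (\<lambda>j A. L * real (card (A \<inter> S j))) T = ereal (L * wT) - H T"
    unfolding objective_def welfare_v wT_def ..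
  have oR: "objective n H (\<lambda>j A. L * real (card (A \<inter> S j))) R = ereal (L * wR - h)"
    unfolding objective_def welfare_v wR_def hR by simp
  have sub: "\<forall>j<n. R j \<subseteq> T j"
  proof (rule ccontr)
    assume "\<not> (\<forall>j<n. R j \<subseteq> T j)"
    then obtain j0 where j0: "j0 < n" "\<not> R j0 \<subseteq> T j0" by blast
    have ps: "T j0 \<inter> S j0 \<subset> R j0 \<inter> S j0" using j0 TS RSe by blast
    then have lt: "card (T j0 \<inter> S j0) < card (R j0 \<inter> S j0)"
      using psubset_card_mono[OF _ ps] finR j0 by auto
    have "(\<Sum>j<n. card (T j \<inter> S j)) < (\<Sum>j<n. card (R j \<inter> S j))"
      by (rule sum_strict_mono_ex1) (use le j0 lt in auto)
    then have "(\<Sum>j<n. card (T j \<inter> S j)) + 1 \<le> (\<Sum>j<n. card (R j \<inter> S j))" by simp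
    then have "real (\<Sum>j<n. card (T j \<inter> S j)) + 1 \<le> real (\<Sum>j<n. card (R j \<inter> S j))"
      by (metis of_nat_1 of_nat_add of_nat_le_iff)
    then have w: "wT + 1 \<le> wR" unfolding wT_def wR_def by simp
    have Lpos: "L > 0" using h0 hL by simp
    have "L * (wT + 1) \<le> L * wR" by (rule mult_left_mono) (use w Lpos in auto)
    then have "L * wT + L \<le> L * wR" by (simp add: distrib_left)
    then have lt2: "L * wT < L * wR - h" using hL by simp
    moreover have "ereal (L * wR - h) \<le> ereal (L * wT) - H T" using obj oT oR by simp
    moreover have "ereal (L * wT) - H T \<le> ereal (L * wT)" using Hnn
      by (cases "H T") auto
    ultimately have "ereal (L * wR - h) \<le> ereal (L * wT)" by (metis order_trans)
    then show False using lt2 by simp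
  qed
  have eq: "\<forall>j<n. T j \<inter> S j = R j" using sub TS RS by blast
  then have "wT = wR" unfolding wT_def wR_def using RSe by simp
  then have "ereal (L * wR - h) \<le> ereal (L * wR) - H T" using obj oT oR by simp
  then have "H T \<le> ereal h"
    using Hnn by (cases "H T") auto
  with Hmono[OF sub] hR have "H T = H R" by simp
  with sub eq show ?thesis by simp
qed


theorem theorem5p3:
  fixes n :: nat
    and M :: "nat \<Rightarrow> 'a set"
    and C :: "'a set \<Rightarrow> real"
    and H :: "(nat \<Rightarrow> 'a set) \<Rightarrow> ereal"
    and D :: "(nat \<Rightarrow> 'a set \<Rightarrow> real) set"
    and alg :: "(nat \<Rightarrow> 'a set \<Rightarrow> real) \<Rightarrow> (nat \<Rightarrow> 'a set)"
    and alg_minus :: "(nat \<Rightarrow> 'a set \<Rightarrow> real) \<Rightarrow> nat \<Rightarrow> (nat \<Rightarrow> 'a set)"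
  assumes fin: "\<And>i. i < n \<Longrightarrow> finite (M i)"
    and disj: "\<And>i j. i < n \<Longrightarrow> j < n \<Longrightarrow> i \<noteq> j \<Longrightarrow> M i \<inter> M j = {}"
    and cost: "cost_function n M C"
    and H_nonneg: "\<And>S. S \<in> allocs n M \<Longrightarrow> H S \<ge> 0"
    and H_norm: "H empty_alloc = 0"
    and H_mono: "\<And>S T. S \<in> allocs n M \<Longrightarrow> T \<in> allocs n M \<Longrightarrow>
                   (\<forall>i<n. S i \<subseteq> T i) \<Longrightarrow> H S \<le> H T"
    and D_valid: "\<And>v i. v \<in> D \<Longrightarrow> i < n \<Longrightarrow> valuation (M i) (v i)"
    and D_additive: "\<And>v. (\<forall>i<n. additive_valuation (M i) (v i)) \<Longrightarrow> v \<in> D"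
    and alg_max: "\<And>v. v \<in> D \<Longrightarrow> is_maximizer n H v (allocs n M) (alg v)"
    and alg_minus_max: "\<And>v i. v \<in> D \<Longrightarrow> i < n \<Longrightarrow>
                   is_maximizer n H v {S \<in> allocs n M. S i = {}} (alg_minus v i)"
    and covers: "\<And>v. v \<in> D \<Longrightarrow>
                   (\<Sum>i<n. vcg_payment n H v (alg v) (alg_minus v i) i)
                     \<ge> ereal (C (alloc_union n (alg v)))"
  shows "\<forall>S \<in> allocs n M. H S \<ge> ereal (potential n C S)"
proof -
  have Hnn: "\<And>S. S \<in> allocs n M \<Longrightarrow> 0 \<le> H S" using H_nonneg by simp
  have C0: "C {} = 0" using cost unfolding cost_function_def by simp
  have Cmono: "\<And>A B. A \<subseteq> B \<Longrightarrow> B \<subseteq> (\<Union>i<n. M i) \<Longrightarrow> C A \<le> C B"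
    using cost unfolding cost_function_def by blast
  have main: "\<forall>S. S \<in> allocs n M \<longrightarrow> card {i. i < n \<and> S i \<noteq> {}} = m
      \<longrightarrow> H S \<ge> ereal (potential n C S)" for m
  proof (induction m rule: less_induct)
    case (less m)
    show ?case
    proof (intro allI impI)
      fix S assume S: "S \<in> allocs n M" and cK: "card {i. i < n \<and> S i \<noteq> {}} = m"
      define K where "K = {i. i < n \<and> S i \<noteq> {}}"
      have finK: "finite K" unfolding K_def by simp
      have SM: "\<forall>j<n. S j \<subseteq> M j" and Sout: "\<forall>j\<ge>n. S j = {}" using S unfolding allocs_def by auto
      have finS: "\<forall>j<n. finite (S j)" using SM fin finite_subset by blast
      show "H S \<ge> ereal (potential n C S)"
      proof (cases "H S = \<infinity>")
        case True then show ?thesis by simp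
      next
        case False
        obtain h where hS: "H S = ereal h" using False Hnn[OF S] by (cases "H S") auto
        have h0: "0 \<le> h" using Hnn[OF S] hS by simp
        show ?thesis
        proof (cases "K = {}")
          case True
          then have "S = empty_alloc" using Sout unfolding K_def empty_alloc_def
            by (auto simp: fun_eq_iff) (metis empty_iff not_le)
          moreover have "potential n C empty_alloc = 0"
            unfolding potential_def empty_alloc_def using C0 by simp
          ultimately show ?thesis using H_norm by simp
        next
          case Kne: False
          define L where "L = h + 1"
          define v where "v = (\<lambda>j A. L * real (card (A \<inter> S j)))"
          have Lpos: "L > 0" unfolding L_def using h0 by simp
          have vD: "v \<in> D"
          proof (rule D_additive, intro allI impI)
            fix i assume i: "i < n"
            show "additive_valuation (M i) (v i)"
              unfolding additive_valuation_def valuation_def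
            proof (intro conjI allI impI)
              show "v i {} = 0" unfolding v_def by simp
              fix A assume "A \<subseteq> M i"
              then have fA: "finite A" using fin i finite_subset by blast
              show "0 \<le> v i A" unfolding v_def using Lpos by simp
              show "v i A = (\<Sum>j\<in>A. v i {j})" unfolding v_def
                using card_sum_single[OF fA, of "S i"] by (simp add: sum_distrib_left[symmetric])
            next
              fix A B assume AB: "A \<subseteq> B \<and> B \<subseteq> M i"
              then have "finite B" using fin i finite_subset by blast
              then have "card (A \<inter> S i) \<le> card (B \<inter> S i)" using AB by (intro card_mono) auto
              then show "v i A \<le> v i B" unfolding v_def using Lpos by simp
            qed
          qed
          have wv: "welfare n v X = L * (\<Sum>j<n. real (card (X j \<inter> S j)))" for X
            unfolding v_def by (rule welfare_v)
          have vapp: "v j A = L * real (card (A \<inter> S j))" for j A by (simp add: v_def)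
          have amax: "is_maximizer n H v (allocs n M) (alg v)" using alg_max[OF vD] .
          have algA: "alg v \<in> allocs n M" using amax unfolding is_maximizer_def by simp
          have c1: "(\<forall>j<n. S j \<subseteq> alg v j) \<and> H (alg v) = H S \<and> (\<forall>j<n. alg v j \<inter> S j = S j)"
          proof (rule core[where S=S and h=h and L=L])
            show "\<forall>j<n. finite (S j)" by fact
            show "(\<forall>j<n. S j \<subseteq> alg v j) \<Longrightarrow> H S \<le> H (alg v)" by (rule H_mono[OF S algA])
          qed (use S algA hS h0 Hnn H_mono amax in \<open>auto simp: L_def v_def is_maximizer_def\<close>)
          define hh where "hh i = real_of_ereal (H (S(i:={})))" for i
          have Si: "S(i:={}) \<in> allocs n M" for i using S unfolding allocs_def by auto
          have hhS: "H (S(i:={})) = ereal (hh i)" if "i < n" for i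
          proof -
            have "H (S(i:={})) \<le> H S" by (rule H_mono[OF Si S]) auto
            then show ?thesis using Hnn[OF Si] hS unfolding hh_def by (cases "H (S(i:={}))") auto
          qed
          have hhle: "hh i \<le> h" if "i < n" for i
          proof -
            have "H (S(i:={})) \<le> H S" by (rule H_mono[OF Si S]) auto
            then show ?thesis using hhS[OF that] hS by simp
          qed
          have hh0: "0 \<le> hh i" if "i < n" for i using Hnn[OF Si[of i]] hhS[OF that] by simp
          have pay: "vcg_payment n H v (alg v) (alg_minus v i) i = ereal (h - hh i)" if i: "i < n" for i
          proof -
            have mm: "is_maximizer n H v {S \<in> allocs n M. S i = {}} (alg_minus v i)"
              using alg_minus_max[OF vD i] .
            then have amA: "alg_minus v i \<in> allocs n M" "alg_minus v i i = {}"
              unfolding is_maximizer_def by auto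
            have c2: "(\<forall>j<n. (S(i:={})) j \<subseteq> alg_minus v i j) \<and> H (alg_minus v i) = H (S(i:={}))
                \<and> (\<forall>j<n. alg_minus v i j \<inter> S j = (S(i:={})) j)"
            proof (rule core[where S=S and h="hh i" and L=L])
              show "\<forall>j<n. finite (S j)" by fact
              show "H (S(i := {})) = ereal (hh i)" using hhS[OF i] .
              show "0 \<le> hh i" using hh0[OF i] .
              show "hh i < L" using hhle[OF i] unfolding L_def by simp
              show "0 \<le> H (alg_minus v i)" using Hnn[OF amA(1)] .
              show "(\<forall>j<n. (S(i:={})) j \<subseteq> alg_minus v i j) \<Longrightarrow> H (S(i:={})) \<le> H (alg_minus v i)"
                by (rule H_mono[OF Si amA(1)])
              show "objective n H (\<lambda>j A. L * real (card (A \<inter> S j))) (S(i := {}))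
                  \<le> objective n H (\<lambda>j A. L * real (card (A \<inter> S j))) (alg_minus v i)"
                using mm Si[of i] unfolding is_maximizer_def v_def by auto
            qed (use amA in auto)
            have w1: "welfare n v (alg_minus v i) = L * (\<Sum>j\<in>{..<n} - {i}. real (card (S j)))"
            proof -
              have "welfare n v (alg_minus v i) = L * (\<Sum>j<n. real (card ((S(i:={})) j)))"
                unfolding wv using c2 by (intro arg_cong[where f="\<lambda>x. L * x"] sum.cong) auto
              also have "(\<Sum>j<n. real (card ((S(i:={})) j))) = (\<Sum>j\<in>{..<n} - {i}. real (card (S j)))"
                using i by (simp add: sum.remove[of "{..<n}" i] )
              finally show ?thesis .
            qed
            have w2: "(\<Sum>j\<in>{..<n} - {i}. v j (alg v j)) = L * (\<Sum>j\<in>{..<n} - {i}. real (card (S j)))"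
              unfolding sum_distrib_left
            proof (intro sum.cong refl)
              fix j assume "j \<in> {..<n} - {i}"
              then have "alg v j \<inter> S j = S j" using c1 by auto
              then show "v j (alg v j) = L * real (card (S j))" by (simp only: vapp)
            qed
            show ?thesis unfolding vcg_payment_def w1 w2 c1[THEN conjunct2, THEN conjunct1]
              c2[THEN conjunct2, THEN conjunct1] hhS[OF i] hS by simp
          qed
          have "ereal (C (alloc_union n S)) \<le> ereal (C (alloc_union n (alg v)))"
            unfolding alloc_union_def
            unfolding ereal_less_eq
          proof (intro Cmono)
            show "(\<Union>i<n. S i) \<subseteq> (\<Union>i<n. alg v i)" using c1 by blast
            have "\<forall>i<n. alg v i \<subseteq> M i" using algA unfolding allocs_def by simp
            then show "(\<Union>i<n. alg v i) \<subseteq> (\<Union>i<n. M i)" by blast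
          qed
          also have "\<dots> \<le> (\<Sum>i<n. vcg_payment n H v (alg v) (alg_minus v i) i)" using covers[OF vD] .
          also have "\<dots> = (\<Sum>i<n. ereal (h - hh i))" by (rule sum.cong) (simp_all add: pay)
          also have "\<dots> = ereal (\<Sum>i<n. h - hh i)" by (rule sum_ereal)
          finally have cov: "C (\<Union>i<n. S i) \<le> (\<Sum>i<n. h - hh i)" unfolding alloc_union_def ereal_less_eq .
          define P where "P = potential n C S"
          define Pi where "Pi i = potential n C (S(i:={}))" for i
          have pid: "(\<Sum>i<n. P - Pi i) = C (\<Union>i<n. S i)" using pot_id[of C n S, OF C0] unfolding P_def Pi_def .
          have KN: "K \<subseteq> {..<n}" unfolding K_def by auto
          have outK: "i < n \<Longrightarrow> i \<notin> K \<Longrightarrow> S(i:={}) = S" for i unfolding K_def by (auto simp: fun_upd_idem)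
          have s1: "(\<Sum>i<n. h - hh i) = (\<Sum>i\<in>K. h - hh i)"
          proof (rule sum.mono_neutral_right)
            show "\<forall>i\<in>{..<n} - K. h - hh i = 0"
            proof
              fix i assume i: "i \<in> {..<n} - K"
              then have "ereal (hh i) = ereal h" using hhS[of i] outK[of i] hS by auto
              then show "h - hh i = 0" by simp
            qed
          qed (use KN in auto)
          have s2: "(\<Sum>i<n. P - Pi i) = (\<Sum>i\<in>K. P - Pi i)"
          proof (rule sum.mono_neutral_right)
            show "\<forall>i\<in>{..<n} - K. P - Pi i = 0"
            proof
              fix i assume i: "i \<in> {..<n} - K"
              then show "P - Pi i = 0" using outK[of i] unfolding P_def Pi_def by auto
            qed
          qed (use KN in auto)
          have IH: "Pi i \<le> hh i" if iK: "i \<in> K" for i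
          proof -
            have iN: "i < n" using iK KN by auto
            have "{j. j < n \<and> (S(i:={})) j \<noteq> {}} = K - {i}" unfolding K_def by auto
            then have cm: "card {j. j < n \<and> (S(i:={})) j \<noteq> {}} < m"
              using cK card_Diff1_less[OF finK iK] unfolding K_def by simp
            have "ereal (Pi i) \<le> H (S(i:={}))" unfolding Pi_def by (rule less.IH[OF cm, rule_format, OF Si refl])
            then show ?thesis using hhS[OF iN] by simp
          qed
          have "0 \<le> (\<Sum>i\<in>K. (h - hh i) - (P - Pi i)) + (\<Sum>i\<in>K. hh i - Pi i)"
          proof -
            have "(\<Sum>i\<in>K. (h - hh i) - (P - Pi i)) = (\<Sum>i\<in>K. h - hh i) - (\<Sum>i\<in>K. P - Pi i)"
              by (simp add: sum_subtractf)
            moreover have "(\<Sum>i\<in>K. h - hh i) - (\<Sum>i\<in>K. P - Pi i) \<ge> 0" using cov pid s1 s2 by simp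
            moreover have "(\<Sum>i\<in>K. hh i - Pi i) \<ge> 0" using IH by (intro sum_nonneg) auto
            ultimately show ?thesis by simp
          qed
          also have "(\<Sum>i\<in>K. (h - hh i) - (P - Pi i)) + (\<Sum>i\<in>K. hh i - Pi i) = (\<Sum>i\<in>K. h - P)"
            by (simp add: sum.distrib[symmetric])
          also have "\<dots> = real (card K) * (h - P)" by simp
          finally have "0 \<le> real (card K) * (h - P)" .
          moreover have "card K > 0" using Kne finK by (simp add: card_gt_0_iff)
          ultimately have "P \<le> h" by (simp add: zero_le_mult_iff)
          then show ?thesis unfolding P_def hS by simp
        qed
      qed
    qed
  qed
  show ?thesis using main by blast
qed


end
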